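(* Let $K/\mathbb{Q}$ be a finite extension with ring of integers $A$, let $f:A\to\mathbb{N}$ be any function, let $t$ be a positive integer, and let $H(f,t)=\sum_{k\in A}\big(k^{f(k)}(k^t-1)\big)$ be the sum of the principal ideals generated by the elements $k^{f(k)}(k^t-1)$. Then $\ker pr_t\subseteq H(f,t)$; in particular $H(f,t)$ is $t$-congruing.
   Context: For a maximal ideal $\mathfrak p$ of $A$, $H^{\mathfrak p}_t$ is the ideal of the completion $\hat A_{\mathfrak p}$ generated by all $x^t-1$ with $x\in\hat A_{\mathfrak p}^\times$; $pr_t:A\to\prod_{\mathfrak p}\hat A_{\mathfrak p}/H^{\mathfrak p}_t$ (over all maximal ideals) has $\mathfrak p$-component completion followed by reduction mod $H^{\mathfrak p}_t$. An ideal $I$ is $t$-congruing if for every $a\in A$ there is $N\in\mathbb{N}$ with $a^N(a^t-1)\in I$. *)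

theory Defs
  imports "HOL-Computational_Algebra.Polynomial" Complex_Main
begin

definition is_subfield :: "complex set \<Rightarrow> bool" where
  "is_subfield K \<longleftrightarrow> 0 \<in> K \<and> 1 \<in> K \<and>
     (\<forall>x\<in>K. \<forall>y\<in>K. x + y \<in> K \<and> x - y \<in> K \<and> x * y \<in> K) \<and>
     (\<forall>x\<in>K. x \<noteq> 0 \<longrightarrow> inverse x \<in> K)"

definition finite_over_rat :: "complex set \<Rightarrow> bool" where
  "finite_over_rat K \<longleftrightarrow>
     (\<exists>B. finite B \<and> B \<subseteq> K \<and> K = {\<Sum>b\<in>B. q b * b | q. \<forall>b. q b \<in> \<rat>})"

definition number_field :: "complex set \<Rightarrow> bool" where
  "number_field K \<longleftrightarrow> is_subfield K \<and> finite_over_rat K"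

definition ring_of_integers :: "complex set \<Rightarrow> complex set" where
  "ring_of_integers K = {x \<in> K. algebraic_int x}"

definition is_ideal :: "complex set \<Rightarrow> complex set \<Rightarrow> bool" where
  "is_ideal A I \<longleftrightarrow> I \<subseteq> A \<and> 0 \<in> I \<and> (\<forall>x\<in>I. \<forall>y\<in>I. x + y \<in> I) \<and>
     (\<forall>a\<in>A. \<forall>x\<in>I. a * x \<in> I)"

definition gen_ideal :: "complex set \<Rightarrow> complex set \<Rightarrow> complex set" where
  "gen_ideal A S = \<Inter>{I. is_ideal A I \<and> S \<subseteq> I}"

definition maximal_ideal :: "complex set \<Rightarrow> complex set \<Rightarrow> bool" where
  "maximal_ideal A P \<longleftrightarrow> is_ideal A P \<and> P \<noteq> A \<and>
     (\<forall>J. is_ideal A J \<and> P \<subseteq> J \<longrightarrow> J = P \<or> J = A)"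

definition ideal_mult :: "complex set \<Rightarrow> complex set \<Rightarrow> complex set \<Rightarrow> complex set" where
  "ideal_mult A I J = gen_ideal A {x * y | x y. x \<in> I \<and> y \<in> J}"

fun ideal_pow :: "complex set \<Rightarrow> complex set \<Rightarrow> nat \<Rightarrow> complex set" where
  "ideal_pow A P 0 = A"
| "ideal_pow A P (Suc n) = ideal_mult A (ideal_pow A P n) P"

text \<open>The P-adic completion of A, realised as the inverse limit of the rings A / P^n.
  An element is represented by a compatible sequence of representatives x n \<in> A
  (x m \<equiv> x n mod P^n for m \<ge> n); two representatives give the same element
  iff they agree mod P^n for every n.\<close>

definition completion :: "complex set \<Rightarrow> complex set \<Rightarrow> (nat \<Rightarrow> complex) set" where
  "completion A P = {x. (\<forall>n. x n \<in> A) \<and> (\<forall>n m. n \<le> m \<longrightarrow> x m - x n \<in> ideal_pow A P n)}"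

definition compl_eq :: "complex set \<Rightarrow> complex set \<Rightarrow> (nat \<Rightarrow> complex) \<Rightarrow> (nat \<Rightarrow> complex) \<Rightarrow> bool" where
  "compl_eq A P x y \<longleftrightarrow> (\<forall>n. x n - y n \<in> ideal_pow A P n)"

definition compl_units :: "complex set \<Rightarrow> complex set \<Rightarrow> (nat \<Rightarrow> complex) set" where
  "compl_units A P = {x \<in> completion A P.
      \<exists>y \<in> completion A P. compl_eq A P (\<lambda>n. x n * y n) (\<lambda>n. 1)}"

text \<open>(Representatives of) the ideal H^P_t of the completion, generated by all
  x^t - 1 with x a unit of the completion: finite combinations
  \<Sum> c_i (x_i^t - 1), with c_i in the completion, up to equality in the completion.\<close>

definition H_loc :: "complex set \<Rightarrow> complex set \<Rightarrow> nat \<Rightarrow> (nat \<Rightarrow> complex) set" where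
  "H_loc A P t = {z \<in> completion A P. \<exists>(k::nat) c g.
      (\<forall>i<k. c i \<in> completion A P \<and> g i \<in> compl_units A P) \<and>
      compl_eq A P z (\<lambda>n. \<Sum>i<k. c i n * ((g i n) ^ t - 1))}"

text \<open>Kernel of pr_t: elements whose image in every completion lies in H^P_t
  (the canonical map A \<rightarrow> completion sends a to the constant sequence).\<close>

definition ker_pr :: "complex set \<Rightarrow> nat \<Rightarrow> complex set" where
  "ker_pr A t = {a \<in> A. \<forall>P. maximal_ideal A P \<longrightarrow> (\<lambda>_. a) \<in> H_loc A P t}"

definition H_ft :: "complex set \<Rightarrow> (complex \<Rightarrow> nat) \<Rightarrow> nat \<Rightarrow> complex set" where
  "H_ft A f t = gen_ideal A {k ^ f k * (k ^ t - 1) | k. k \<in> A}"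

definition t_congruing :: "complex set \<Rightarrow> nat \<Rightarrow> complex set \<Rightarrow> bool" where
  "t_congruing A t I \<longleftrightarrow> (\<forall>a\<in>A. \<exists>N::nat. a ^ N * (a ^ t - 1) \<in> I)"

end

theory Submission
  imports Defs "HOL-Computational_Algebra.Primes" "Jordan_Normal_Form.Char_Poly"
begin


definition ZS :: "complex set \<Rightarrow> complex set" where
  "ZS S = range (\<lambda>c. \<Sum>s\<in>S. of_int (c s) * s)"

lemma ZS_gen: "finite S \<Longrightarrow> s \<in> S \<Longrightarrow> s \<in> ZS S"
  unfolding ZS_def
proof -
  assume S: "finite S" "s \<in> S"
  have "(\<Sum>u\<in>S. of_int (if u = s then 1 else 0) * u) = (\<Sum>u\<in>S. if u = s then s else 0)"
    by (rule sum.cong) auto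
  also have "\<dots> = s" using S by (simp add: sum.delta)
  finally show "s \<in> range (\<lambda>c. \<Sum>s\<in>S. of_int (c s) * s)"
    by (intro range_eqI[where x="\<lambda>u. if u = s then 1 else 0"]) simp
qed

lemma ZS_0: "0 \<in> ZS S"
  unfolding ZS_def by (rule range_eqI[of _ _ "\<lambda>_. 0"]) simp

lemma ZS_add: "x \<in> ZS S \<Longrightarrow> y \<in> ZS S \<Longrightarrow> x + y \<in> ZS S"
  unfolding ZS_def
proof -
  assume "x \<in> range (\<lambda>c. \<Sum>s\<in>S. of_int (c s) * s)" "y \<in> range (\<lambda>c. \<Sum>s\<in>S. of_int (c s) * s)"
  then obtain c d where "x = (\<Sum>s\<in>S. of_int (c s) * s)" "y = (\<Sum>s\<in>S. of_int (d s) * s)" by blast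
  then have "x + y = (\<Sum>s\<in>S. of_int (c s + d s) * s)" by (simp add: sum.distrib distrib_right)
  then show "x + y \<in> range (\<lambda>c. \<Sum>s\<in>S. of_int (c s) * s)"
    by (intro range_eqI[where x="\<lambda>s. c s + d s"])
qed

lemma ZS_smult: "x \<in> ZS S \<Longrightarrow> of_int k * x \<in> ZS S"
  unfolding ZS_def
proof -
  assume "x \<in> range (\<lambda>c. \<Sum>s\<in>S. of_int (c s) * s)"
  then obtain c where "x = (\<Sum>s\<in>S. of_int (c s) * s)" by blast
  then have "of_int k * x = (\<Sum>s\<in>S. of_int (k * c s) * s)" by (simp add: sum_distrib_left mult.assoc)
  then show "of_int k * x \<in> range (\<lambda>c. \<Sum>s\<in>S. of_int (c s) * s)"
    by (intro range_eqI[where x="\<lambda>s. k * c s"])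
qed

lemma ZS_sum: "finite I \<Longrightarrow> (\<And>i. i \<in> I \<Longrightarrow> f i \<in> ZS S) \<Longrightarrow> sum f I \<in> ZS S"
  by (induction I rule: finite_induct) (auto intro: ZS_0 ZS_add)

lemma ZS_mult:
  assumes S: "finite S" and z: "\<And>s. s \<in> S \<Longrightarrow> z * s \<in> ZS T" and w: "w \<in> ZS S"
  shows "z * w \<in> ZS T"
proof -
  obtain c where c: "w = (\<Sum>s\<in>S. of_int (c s) * s)" using w unfolding ZS_def by blast
  have "z * w = (\<Sum>s\<in>S. of_int (c s) * (z * s))" unfolding c by (simp add: sum_distrib_left mult_ac)
  also have "\<dots> \<in> ZS T" using S z by (intro ZS_sum ZS_smult) auto
  finally show ?thesis .
qed

lemma ZS_prod:
  assumes S1: "finite S1" and S2: "finite S2" and a: "a \<in> ZS S1" and b: "b \<in> ZS S2"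
  shows "a * b \<in> ZS {u * v | u v. u \<in> S1 \<and> v \<in> S2}"
proof -
  let ?T = "{u * v | u v. u \<in> S1 \<and> v \<in> S2}"
  have "?T = (\<lambda>(u,v). u * v) ` (S1 \<times> S2)" by auto
  then have fT: "finite ?T" using S1 S2 by simp
  have "u * b \<in> ZS ?T" if u: "u \<in> S1" for u
  proof (rule ZS_mult[OF S2 _ b])
    fix v assume "v \<in> S2"
    then have "u * v \<in> ?T" using u by blast
    then show "u * v \<in> ZS ?T" using ZS_gen[OF fT] by blast
  qed
  then have "b * a \<in> ZS ?T" by (intro ZS_mult[OF S1 _ a]) (auto simp: mult.commute)
  then show ?thesis by (simp add: mult.commute)
qed

lemma pow_in_ZS:
  fixes p :: "int poly"
  assumes p: "poly (map_poly of_int p) x = (0::complex)" "lead_coeff p = 1"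
  shows "x ^ m \<in> ZS {x ^ i | i. i < degree p}"
proof -
  define r where "r = degree p"
  define Sx where "Sx = {x ^ i | i. i < r}"
  have fS: "finite Sx" unfolding Sx_def by simp
  have r0: "r > 0"
  proof (rule ccontr)
    assume "\<not> r > 0"
    then have "degree p = 0" unfolding r_def by simp
    then have "p = [:1:]" using p(2) by (metis leading_coeff_0_iff one_pCons pCons_0_0 degree_0_id)
    then show False using p(1) by simp
  qed
  have gen: "x ^ i \<in> ZS Sx" if "i < r" for i using ZS_gen[OF fS] that unfolding Sx_def by blast
  have xr: "x ^ r \<in> ZS Sx"
  proof -
    have "poly (map_poly of_int p) x = (\<Sum>i\<le>r. of_int (coeff p i) * x ^ i)"
      unfolding r_def by (simp add: poly_altdef degree_map_poly coeff_map_poly)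
    also have "\<dots> = (\<Sum>i<r. of_int (coeff p i) * x ^ i) + x ^ r"
      using p(2) unfolding r_def by (simp add: lessThan_Suc_atMost[symmetric])
    finally have "x ^ r = of_int (-1) * (\<Sum>i<r. of_int (coeff p i) * x ^ i)" using p(1)
      by (simp add: add_eq_0_iff)
    also have "\<dots> \<in> ZS Sx" using gen by (intro ZS_smult ZS_sum) (auto intro: ZS_smult)
    finally show ?thesis .
  qed
  have step: "x * s \<in> ZS Sx" if sS: "s \<in> Sx" for s
  proof -
    obtain i where i: "s = x ^ i" "i < r" using sS unfolding Sx_def by blast
    show ?thesis
    proof (cases "Suc i < r")
      case True then show ?thesis using gen[of "Suc i"] i by simp
    next
      case False then have "Suc i = r" using i by simp
      then show ?thesis using xr i by (metis power_Suc)
    qed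
  qed
  have "x ^ m \<in> ZS Sx"
  proof (induction m)
    case 0 then show ?case using gen[of 0] r0 by simp
  next
    case (Suc m) then show ?case using ZS_mult[OF fS step Suc.IH] by simp
  qed
  then show ?thesis unfolding Sx_def r_def .
qed

lemma ZS_criterion:
  fixes z :: complex
  assumes S: "finite S" and one: "1 \<in> ZS S" and cl: "\<And>s. s \<in> S \<Longrightarrow> z * s \<in> ZS S"
  shows "algebraic_int z"
proof -
  obtain s0 where s0: "s0 \<in> S" "s0 \<noteq> 0"
  proof (rule ccontr)
    assume "\<not> thesis"
    then have "\<forall>s\<in>S. s = 0" using that by blast
    moreover obtain c where "1 = (\<Sum>s\<in>S. of_int (c s) * s)" using one unfolding ZS_def by blast
    ultimately have "(1::complex) = 0" by (simp add: sum.neutral)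
    then show False by simp
  qed
  obtain ws where ws: "set ws = S" "distinct ws" using finite_distinct_list[OF S] by blast
  define n where "n = length ws"
  have bij: "bij_betw ((!) ws) {..<n} S" using bij_betw_nth[OF ws(2) _ ws(1)[symmetric]] unfolding n_def by simp
  have "\<forall>s\<in>S. \<exists>c. z * s = (\<Sum>u\<in>S. of_int (c u) * u)" using cl unfolding ZS_def by blast
  then obtain C where C: "\<And>s. s \<in> S \<Longrightarrow> z * s = (\<Sum>u\<in>S. of_int (C s u) * u)" by metis
  define M :: "int mat" where "M = mat n n (\<lambda>(i,j). C (ws ! i) (ws ! j))"
  define Mc :: "complex mat" where "Mc = map_mat of_int M"
  define v where "v = vec n (\<lambda>i. ws ! i)"
  have MC: "M \<in> carrier_mat n n" unfolding M_def by simp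
  have McC: "Mc \<in> carrier_mat n n" unfolding Mc_def M_def by simp
  have wsS: "ws ! i \<in> S" if "i < n" for i using that ws(1) unfolding n_def by auto
  have "Mc *\<^sub>v v = z \<cdot>\<^sub>v v"
  proof (rule eq_vecI)
    show "dim_vec (Mc *\<^sub>v v) = dim_vec (z \<cdot>\<^sub>v v)" using McC unfolding v_def by simp
  next
    fix i assume "i < dim_vec (z \<cdot>\<^sub>v v)"
    then have i: "i < n" unfolding v_def by simp
    have "(Mc *\<^sub>v v) $ i = (\<Sum>j<n. of_int (C (ws ! i) (ws ! j)) * ws ! j)"
      using i McC unfolding Mc_def M_def v_def
      by (simp add: scalar_prod_def row_def atLeast0LessThan)
    also have "\<dots> = (\<Sum>u\<in>S. of_int (C (ws ! i) u) * u)"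
      using sum.reindex_bij_betw[OF bij, of "\<lambda>u. of_int (C (ws ! i) u) * u"] by simp
    also have "\<dots> = z * ws ! i" using C[OF wsS[OF i]] by simp
    finally show "(Mc *\<^sub>v v) $ i = (z \<cdot>\<^sub>v v) $ i" using i unfolding v_def by simp
  qed
  moreover have "v \<noteq> 0\<^sub>v n"
  proof
    assume v0: "v = 0\<^sub>v n"
    obtain k where k: "k < n" "ws ! k = s0" using s0(1) ws(1) unfolding n_def by (metis in_set_conv_nth)
    have "v $ k = 0" using v0 k by simp
    then show False using k s0 unfolding v_def by simp
  qed
  ultimately have "eigenvector Mc v z" unfolding eigenvector_def using McC unfolding v_def by auto
  then have "eigenvalue Mc z" unfolding eigenvalue_def by blast
  then have "poly (char_poly Mc) z = 0" using eigenvalue_root_char_poly[OF McC] by simp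
  moreover have "char_poly Mc = map_poly of_int (char_poly M)"
    unfolding Mc_def by (rule of_int_hom.char_poly_hom[OF MC])
  moreover have "lead_coeff (char_poly M) = 1" using degree_monic_char_poly[OF MC] by simp
  ultimately show ?thesis unfolding algebraic_int_altdef_ipoly by metis
qed

lemma algebraic_int_plus_times:
  fixes x y :: complex
  assumes x: "algebraic_int x" and y: "algebraic_int y"
  shows "algebraic_int (x + y) \<and> algebraic_int (x * y)"
proof -
  obtain p where p: "poly (map_poly of_int p) x = 0" "lead_coeff p = 1"
    using x unfolding algebraic_int_altdef_ipoly by blast
  obtain q where q: "poly (map_poly of_int q) y = 0" "lead_coeff q = 1"
    using y unfolding algebraic_int_altdef_ipoly by blast
  define Sx where "Sx = {x ^ i | i. i < degree p}"
  define Sy where "Sy = {y ^ i | i. i < degree q}"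
  define S where "S = {u * v | u v. u \<in> Sx \<and> v \<in> Sy}"
  have fx: "finite Sx" and fy: "finite Sy" unfolding Sx_def Sy_def by simp_all
  have fS: "finite S"
  proof -
    have "S = (\<lambda>(u,v). u * v) ` (Sx \<times> Sy)" unfolding S_def by auto
    then show ?thesis using fx fy by simp
  qed
  have px: "x ^ m \<in> ZS Sx" for m unfolding Sx_def using pow_in_ZS[OF p] .
  have py: "y ^ m \<in> ZS Sy" for m unfolding Sy_def using pow_in_ZS[OF q] .
  have prod: "x ^ i * y ^ j \<in> ZS S" for i j unfolding S_def using ZS_prod[OF fx fy px py] .
  have one: "1 \<in> ZS S" using prod[of 0 0] by simp
  have gx: "x * g \<in> ZS S" and gy: "y * g \<in> ZS S" if "g \<in> S" for g
  proof -
    obtain i j where g: "g = x ^ i * y ^ j" using \<open>g \<in> S\<close> unfolding S_def Sx_def Sy_def by blast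
    show "x * g \<in> ZS S" using prod[of "Suc i" j] unfolding g by (simp add: mult.assoc)
    show "y * g \<in> ZS S" using prod[of i "Suc j"] unfolding g by (simp add: mult_ac)
  qed
  have "algebraic_int (x + y)"
    by (rule ZS_criterion[OF fS one]) (simp add: distrib_right ZS_add gx gy)
  moreover have "algebraic_int (x * y)"
  proof (rule ZS_criterion[OF fS one])
    fix g assume "g \<in> S"
    then have yg: "y * g \<in> ZS S" by (rule gy)
    have "x * (y * g) \<in> ZS S" using ZS_mult[of S x S "y * g"] fS gx yg by blast
    then show "x * y * g \<in> ZS S" by (simp add: mult.assoc)
  qed
  ultimately show ?thesis by blast
qed




definition csubring :: "complex set \<Rightarrow> bool" where
  "csubring A \<longleftrightarrow> 0 \<in> A \<and> 1 \<in> A \<and> (\<forall>x\<in>A. \<forall>y\<in>A. x + y \<in> A \<and> x * y \<in> A \<and> - x \<in> A)"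

lemma sr_ideal_self: "csubring A \<Longrightarrow> is_ideal A A"
  unfolding csubring_def is_ideal_def by auto

lemma sr_diff: "csubring A \<Longrightarrow> x \<in> A \<Longrightarrow> y \<in> A \<Longrightarrow> x - y \<in> A"
  unfolding csubring_def by (metis diff_conv_add_uminus)

lemma sr_pow: "csubring A \<Longrightarrow> x \<in> A \<Longrightarrow> x ^ n \<in> A"
  by (induction n) (auto simp: csubring_def)

lemma sr_int: "csubring A \<Longrightarrow> of_int z \<in> A"
proof -
  assume s: "csubring A"
  have "of_nat n \<in> A" for n
    using s by (induction n) (auto simp: csubring_def)
  then show ?thesis using s
  proof (cases z)
    case (neg n)
    have "of_nat (Suc n) \<in> A" using \<open>\<And>n. of_nat n \<in> A\<close> by blast
    then have "- of_nat (Suc n) \<in> A" using s by (auto simp: csubring_def)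
    moreover have "(of_int z :: complex) = - of_nat (Suc n)" using neg by simp
    ultimately show ?thesis by simp
  qed auto
qed

lemma sr_sum: "finite T \<Longrightarrow> csubring A \<Longrightarrow> (\<And>i. i \<in> T \<Longrightarrow> h i \<in> A) \<Longrightarrow> sum h T \<in> A"
  by (induction T rule: finite_induct) (auto simp: csubring_def)

lemma sr_prod: "finite T \<Longrightarrow> csubring A \<Longrightarrow> (\<And>i. i \<in> T \<Longrightarrow> h i \<in> A) \<Longrightarrow> prod h T \<in> A"
  by (induction T rule: finite_induct) (auto simp: csubring_def)

lemma ideal_sub: "is_ideal A I \<Longrightarrow> x \<in> I \<Longrightarrow> x \<in> A"
  unfolding is_ideal_def by auto

lemma ideal_0: "is_ideal A I \<Longrightarrow> 0 \<in> I"
  unfolding is_ideal_def by auto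

lemma ideal_add: "is_ideal A I \<Longrightarrow> x \<in> I \<Longrightarrow> y \<in> I \<Longrightarrow> x + y \<in> I"
  unfolding is_ideal_def by auto

lemma ideal_lmult: "is_ideal A I \<Longrightarrow> a \<in> A \<Longrightarrow> x \<in> I \<Longrightarrow> a * x \<in> I"
  unfolding is_ideal_def by auto

lemma ideal_rmult: "is_ideal A I \<Longrightarrow> a \<in> A \<Longrightarrow> x \<in> I \<Longrightarrow> x * a \<in> I"
  unfolding is_ideal_def by (auto simp: mult.commute)

lemma ideal_minus: "csubring A \<Longrightarrow> is_ideal A I \<Longrightarrow> x \<in> I \<Longrightarrow> - x \<in> I"
  using ideal_lmult[of A I "-1" x] by (auto simp: csubring_def)

lemma ideal_diff: "csubring A \<Longrightarrow> is_ideal A I \<Longrightarrow> x \<in> I \<Longrightarrow> y \<in> I \<Longrightarrow> x - y \<in> I"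
  using ideal_add[of A I x "-y"] ideal_minus[of A I y] by simp

lemma ideal_sum: "finite T \<Longrightarrow> is_ideal A I \<Longrightarrow> (\<And>i. i \<in> T \<Longrightarrow> h i \<in> I) \<Longrightarrow> sum h T \<in> I"
  by (induction T rule: finite_induct) (auto intro: ideal_0 ideal_add)

lemma gen_ideal_sub: "S \<subseteq> gen_ideal A S"
  unfolding gen_ideal_def by auto

lemma gen_ideal_least: "is_ideal A I \<Longrightarrow> S \<subseteq> I \<Longrightarrow> gen_ideal A S \<subseteq> I"
  unfolding gen_ideal_def by auto

lemma gen_ideal_ideal: assumes "csubring A" "S \<subseteq> A" shows "is_ideal A (gen_ideal A S)"
proof -
  have ne: "is_ideal A A \<and> S \<subseteq> A" using assms sr_ideal_self by auto
  show ?thesis unfolding is_ideal_def gen_ideal_def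
    using ne by (auto simp: is_ideal_def)
qed

lemma ideal_pow_ideal: assumes "csubring A" "is_ideal A P" shows "is_ideal A (ideal_pow A P n)"
proof (induction n)
  case 0 then show ?case using assms sr_ideal_self by simp
next
  case (Suc n)
  have "{x * y |x y. x \<in> ideal_pow A P n \<and> y \<in> P} \<subseteq> A"
  proof (clarify)
    fix x y assume "x \<in> ideal_pow A P n" "y \<in> P"
    then have "x \<in> A" "y \<in> A" using Suc assms(2) unfolding is_ideal_def by auto
    then show "x * y \<in> A" using assms(1) by (simp add: csubring_def)
  qed
  then show ?case unfolding ideal_pow.simps ideal_mult_def
    using gen_ideal_ideal[OF assms(1)] by blast
qed

lemma gen_mult_bilin:
  assumes sr: "csubring A" and S1: "S1 \<subseteq> A" and S2: "S2 \<subseteq> A" and Z: "is_ideal A Z"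
    and gen: "\<And>a b. a \<in> S1 \<Longrightarrow> b \<in> S2 \<Longrightarrow> a * b \<in> Z"
    and x: "x \<in> gen_ideal A S1" and y: "y \<in> gen_ideal A S2"
  shows "x * y \<in> Z"
proof -
  have step: "gen_ideal A S2 \<subseteq> {w \<in> A. w * a \<in> Z}" if a: "a \<in> S1" for a
  proof (rule gen_ideal_least)
    show "is_ideal A {w \<in> A. w * a \<in> Z}" using Z sr unfolding is_ideal_def csubring_def
      by (auto simp: distrib_right mult.assoc)
    show "S2 \<subseteq> {w \<in> A. w * a \<in> Z}" using S2 gen a by (auto simp: mult.commute[of _ a])
  qed
  have "gen_ideal A S1 \<subseteq> {v \<in> A. \<forall>w\<in>gen_ideal A S2. v * w \<in> Z}"
  proof (rule gen_ideal_least)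
    show "is_ideal A {v \<in> A. \<forall>w\<in>gen_ideal A S2. v * w \<in> Z}" using Z sr unfolding is_ideal_def csubring_def
      by (auto simp: distrib_right mult.assoc)
    show "S1 \<subseteq> {v \<in> A. \<forall>w\<in>gen_ideal A S2. v * w \<in> Z}" using S1 step by (auto simp: mult.commute)
  qed
  then show ?thesis using x y by auto
qed




lemma maximal_prime:
  assumes sr: "csubring A" and P: "maximal_ideal A P" and x: "x \<in> A" and y: "y \<in> A"
    and xy: "x * y \<in> P" and nx: "x \<notin> P"
  shows "y \<in> P"
proof -
  have PI: "is_ideal A P" using P by (simp add: maximal_ideal_def)
  define J where "J = {p + x * r | p r. p \<in> P \<and> r \<in> A}"
  have JI: "is_ideal A J"
    unfolding is_ideal_def J_def
  proof (intro conjI ballI)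
    show "{p + x * r |p r. p \<in> P \<and> r \<in> A} \<subseteq> A"
      using PI x sr ideal_sub[OF PI] by (auto simp: csubring_def)
    show "0 \<in> {p + x * r |p r. p \<in> P \<and> r \<in> A}"
      using PI sr by (auto simp: csubring_def intro!: exI[of _ 0] ideal_0)
  next
    fix u v assume "u \<in> {p + x * r |p r. p \<in> P \<and> r \<in> A}" "v \<in> {p + x * r |p r. p \<in> P \<and> r \<in> A}"
    then obtain p1 r1 p2 r2 where "u = p1 + x * r1" "v = p2 + x * r2" "p1 \<in> P" "r1 \<in> A" "p2 \<in> P" "r2 \<in> A" by auto
    moreover have "p1 + p2 \<in> P" using PI \<open>p1 \<in> P\<close> \<open>p2 \<in> P\<close> by (rule ideal_add)
    moreover have "r1 + r2 \<in> A" using sr \<open>r1 \<in> A\<close> \<open>r2 \<in> A\<close> by (simp add: csubring_def)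
    moreover have "u + v = (p1 + p2) + x * (r1 + r2)" using \<open>u = p1 + x * r1\<close> \<open>v = p2 + x * r2\<close>
      by (simp add: algebra_simps)
    ultimately show "u + v \<in> {p + x * r |p r. p \<in> P \<and> r \<in> A}" by blast
  next
    fix a u assume a: "a \<in> A" and "u \<in> {p + x * r |p r. p \<in> P \<and> r \<in> A}"
    then obtain p1 r1 where "u = p1 + x * r1" "p1 \<in> P" "r1 \<in> A" by auto
    moreover have "a * p1 \<in> P" using PI a \<open>p1 \<in> P\<close> by (rule ideal_lmult)
    moreover have "a * r1 \<in> A" using sr a \<open>r1 \<in> A\<close> by (simp add: csubring_def)
    moreover have "a * u = a * p1 + x * (a * r1)" using \<open>u = p1 + x * r1\<close>
      by (simp add: algebra_simps)
    ultimately show "a * u \<in> {p + x * r |p r. p \<in> P \<and> r \<in> A}" by blast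
  qed
  have PJ: "P \<subseteq> J" unfolding J_def
  proof
    fix p assume "p \<in> P" then show "p \<in> {p + x * r |p r. p \<in> P \<and> r \<in> A}"
    proof -
      assume "p \<in> P"
      moreover have "(0::complex) \<in> A" using sr by (simp add: csubring_def)
      moreover have "p = p + x * 0" by simp
      ultimately show ?thesis by blast
    qed
  qed
  have "x \<in> J" unfolding J_def
  proof -
    have "(0::complex) \<in> P" using PI by (rule ideal_0)
    moreover have "(1::complex) \<in> A" using sr by (simp add: csubring_def)
    moreover have "x = 0 + x * 1" by simp
    ultimately show "x \<in> {p + x * r |p r. p \<in> P \<and> r \<in> A}" by blast
  qed
  then have "J \<noteq> P" using nx by auto
  then have "J = A" using P JI PJ unfolding maximal_ideal_def by blast
  then have "1 \<in> J" using sr by (simp add: csubring_def)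
  then obtain p r where pr: "1 = p + x * r" "p \<in> P" "r \<in> A" unfolding J_def by auto
  have "y = (p + x * r) * y" using pr(1) by simp
  also have "\<dots> = p * y + (x * y) * r" by (simp add: algebra_simps)
  finally have "y = p * y + (x * y) * r" .
  moreover have "p * y \<in> P" using pr PI y by (simp add: ideal_rmult)
  moreover have "(x * y) * r \<in> P" using xy PI pr by (simp add: ideal_rmult)
  ultimately show ?thesis using PI by (metis ideal_add)
qed

lemma exists_maximal:
  assumes sr: "csubring A" and J: "is_ideal A J" and n1: "1 \<notin> J"
  shows "\<exists>P. maximal_ideal A P \<and> J \<subseteq> P"
proof -
  define F where "F = {X. is_ideal A X \<and> J \<subseteq> X \<and> 1 \<notin> X}"
  have "F \<noteq> {}" using J n1 unfolding F_def by auto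
  moreover have "\<Union>C \<in> F" if Cne: "C \<noteq> {}" and Cch: "subset.chain F C" for C
  proof -
    have CF: "C \<subseteq> F" and ch: "\<forall>X\<in>C. \<forall>Y\<in>C. X \<subseteq> Y \<or> Y \<subseteq> X"
      using Cch unfolding subset.chain_def by auto
    obtain X0 where X0: "X0 \<in> C" using Cne by auto
    have "is_ideal A (\<Union>C)" unfolding is_ideal_def
    proof (intro conjI ballI)
      show "\<Union>C \<subseteq> A" using CF unfolding F_def is_ideal_def by auto
      show "0 \<in> \<Union>C" using CF X0 unfolding F_def is_ideal_def by auto
    next
      fix x y assume "x \<in> \<Union>C" "y \<in> \<Union>C"
      then obtain X Y where XY: "x \<in> X" "y \<in> Y" "X \<in> C" "Y \<in> C" by blast
      have IX: "is_ideal A X" "is_ideal A Y" using XY(3,4) CF unfolding F_def by auto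
      from ch XY(3,4) have "X \<subseteq> Y \<or> Y \<subseteq> X" by blast
      then show "x + y \<in> \<Union>C"
      proof
        assume "X \<subseteq> Y" then have "x + y \<in> Y" using XY IX ideal_add by blast
        then show ?thesis using XY by blast
      next
        assume "Y \<subseteq> X" then have "x + y \<in> X" using XY IX ideal_add by blast
        then show ?thesis using XY by blast
      qed
    next
      fix a x assume "a \<in> A" "x \<in> \<Union>C"
      then obtain X where X: "X \<in> C" "x \<in> X" by blast
      then have "is_ideal A X" using CF unfolding F_def by auto
      then have "a * x \<in> X" using X \<open>a \<in> A\<close> ideal_lmult by blast
      then show "a * x \<in> \<Union>C" using X by blast
    qed
    moreover have "J \<subseteq> \<Union>C" using CF X0 unfolding F_def by auto
    moreover have "1 \<notin> \<Union>C" using CF unfolding F_def by auto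
    ultimately show ?thesis unfolding F_def by auto
  qed
  ultimately obtain M where M: "M \<in> F" "\<forall>X\<in>F. M \<subseteq> X \<longrightarrow> X = M"
    using subset_Zorn_nonempty[of F] by blast
  have "maximal_ideal A M" unfolding maximal_ideal_def
  proof (intro conjI allI impI)
    show "is_ideal A M" using M unfolding F_def by auto
    show "M \<noteq> A" using M sr unfolding F_def csubring_def by auto
  next
    fix X assume X: "is_ideal A X \<and> M \<subseteq> X"
    show "X = M \<or> X = A"
    proof (cases "1 \<in> X")
      case True
      have "X = A"
      proof
        show "X \<subseteq> A" using X by (simp add: is_ideal_def)
        show "A \<subseteq> X" using X True ideal_lmult[of A X _ 1] by auto
      qed
      then show ?thesis by simp
    next
      case False
      then have "X \<in> F" using X M unfolding F_def by auto
      then show ?thesis using M X by auto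
    qed
  qed
  then show ?thesis using M unfolding F_def by auto
qed

lemma radical_pow:
  assumes sr: "csubring A" and Q: "is_ideal A Q" and P: "is_ideal A P"
    and S: "finite S" "S \<noteq> {}" "S \<subseteq> A" and PS: "P \<subseteq> gen_ideal A S"
    and N: "\<And>s. s \<in> S \<Longrightarrow> s ^ N s \<in> Q"
  shows "ideal_pow A P (\<Sum>s\<in>S. N s) \<subseteq> Q"
proof -
  define Mons where "Mons n = {\<Prod>s\<in>S. s ^ \<alpha> s | \<alpha>. sum \<alpha> S = n}" for n
  have MA: "Mons n \<subseteq> A" for n
    unfolding Mons_def using sr S by (auto intro!: sr_prod sr_pow)
  have main: "ideal_pow A P n \<subseteq> gen_ideal A (Mons n)" for n
  proof (induction n)
    case 0
    have "1 \<in> Mons 0" unfolding Mons_def by (auto intro!: exI[of _ "\<lambda>_. 0"])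
    then have 1: "1 \<in> gen_ideal A (Mons 0)" using gen_ideal_sub by blast
    show ?case
    proof
      fix a assume "a \<in> ideal_pow A P 0"
      then have "a \<in> A" by simp
      then show "a \<in> gen_ideal A (Mons 0)"
        using ideal_lmult[OF gen_ideal_ideal[OF sr MA] \<open>a\<in>A\<close> 1] by simp
    qed
  next
    case (Suc n)
    have GI: "is_ideal A (gen_ideal A (Mons (Suc n)))" using gen_ideal_ideal[OF sr MA] .
    show ?case unfolding ideal_pow.simps ideal_mult_def
    proof (rule gen_ideal_least[OF GI], clarify)
      fix x y assume x: "x \<in> ideal_pow A P n" and y: "y \<in> P"
      show "x * y \<in> gen_ideal A (Mons (Suc n))"
      proof (rule gen_mult_bilin[OF sr MA S(3) GI])
        show "x \<in> gen_ideal A (Mons n)" using Suc x by auto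
        show "y \<in> gen_ideal A S" using PS y by auto
      next
        fix m b assume m: "m \<in> Mons n" and b: "b \<in> S"
        then obtain \<alpha> where \<alpha>: "m = (\<Prod>s\<in>S. s ^ \<alpha> s)" "sum \<alpha> S = n" unfolding Mons_def by auto
        define \<beta> where "\<beta> = \<alpha>(b := Suc (\<alpha> b))"
        have "sum \<beta> S = \<beta> b + sum \<beta> (S - {b})" using sum.remove[OF S(1) b] by simp
        also have "sum \<beta> (S - {b}) = sum \<alpha> (S - {b})" unfolding \<beta>_def by (rule sum.cong) auto
        also have "\<beta> b = Suc (\<alpha> b)" unfolding \<beta>_def by simp
        also have "Suc (\<alpha> b) + sum \<alpha> (S - {b}) = Suc (sum \<alpha> S)" using sum.remove[OF S(1) b, of \<alpha>] by simp
        finally have "sum \<beta> S = Suc n" using \<alpha>(2) by simp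
        moreover have "(\<Prod>s\<in>S. s ^ \<beta> s) = m * b"
        proof -
          define R where "R = (\<Prod>s\<in>S - {b}. s ^ \<alpha> s)"
          have 1: "(\<Prod>s\<in>S. s ^ \<beta> s) = b ^ \<beta> b * (\<Prod>s\<in>S - {b}. s ^ \<beta> s)"
            using prod.remove[OF S(1) b, of "\<lambda>s. s ^ \<beta> s"] by simp
          have 2: "(\<Prod>s\<in>S - {b}. s ^ \<beta> s) = R"
            unfolding \<beta>_def R_def by (rule prod.cong) auto
          have 3: "m = b ^ \<alpha> b * R"
            using prod.remove[OF S(1) b, of "\<lambda>s. s ^ \<alpha> s"] \<alpha>(1) unfolding R_def by simp
          have 4: "b ^ \<beta> b = b ^ \<alpha> b * b" unfolding \<beta>_def by simp
          show ?thesis unfolding 1 2 3 4 by (simp only: mult_ac)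
        qed
        ultimately have "m * b \<in> Mons (Suc n)" unfolding Mons_def mem_Collect_eq
          by (intro exI[of _ \<beta>]) simp
        then show "m * b \<in> gen_ideal A (Mons (Suc n))" using gen_ideal_sub by blast
      qed
    qed
  qed
  have "Mons (\<Sum>s\<in>S. N s) \<subseteq> Q"
  proof
    fix m assume "m \<in> Mons (\<Sum>s\<in>S. N s)"
    then obtain \<alpha> where \<alpha>: "m = (\<Prod>s\<in>S. s ^ \<alpha> s)" "sum \<alpha> S = (\<Sum>s\<in>S. N s)" unfolding Mons_def by auto
    have "\<exists>b\<in>S. N b \<le> \<alpha> b"
    proof (rule ccontr)
      assume "\<not> (\<exists>b\<in>S. N b \<le> \<alpha> b)"
      then have "\<And>s. s \<in> S \<Longrightarrow> \<alpha> s < N s" by (meson not_le)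
      then have "sum \<alpha> S < (\<Sum>s\<in>S. N s)" using S(1,2) by (intro sum_strict_mono) auto
      then show False using \<alpha>(2) by simp
    qed
    then obtain b where b: "b \<in> S" "N b \<le> \<alpha> b" by blast
    define R where "R = (\<Prod>s\<in>S - {b}. s ^ \<alpha> s)"
    have "m = b ^ \<alpha> b * R"
      using prod.remove[OF S(1) b(1), of "\<lambda>s. s ^ \<alpha> s"] \<alpha>(1) unfolding R_def by simp
    also have "b ^ \<alpha> b = b ^ N b * b ^ (\<alpha> b - N b)"
      using b(2) by (simp flip: power_add)
    finally have "m = b ^ N b * (b ^ (\<alpha> b - N b) * R)" by (simp add: mult.assoc)
    moreover have "R \<in> A" unfolding R_def using sr S b by (intro sr_prod sr_pow) auto
    moreover have "b ^ (\<alpha> b - N b) \<in> A" using sr S b by (intro sr_pow) auto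
    ultimately have "b ^ (\<alpha> b - N b) * R \<in> A" "m = b ^ N b * (b ^ (\<alpha> b - N b) * R)"
      using sr unfolding csubring_def by blast+
    then show "m \<in> Q" using ideal_rmult[OF Q _ N[OF b(1)]] by simp
  qed
  then show ?thesis using main gen_ideal_least[OF Q] by blast
qed




interpretation ratvs: vector_space "\<lambda>(q::rat) (z::complex). of_rat q * z"
  by unfold_locales (auto simp: algebra_simps of_rat_add of_rat_mult)

definition pind :: "complex set \<Rightarrow> int \<Rightarrow> complex set \<Rightarrow> bool" where
  "pind A p X \<longleftrightarrow> finite X \<and> X \<subseteq> A \<and>
     (\<forall>c::complex\<Rightarrow>int. \<forall>z\<in>A. (\<Sum>x\<in>X. of_int (c x) * x) = of_int p * z \<longrightarrow> (\<forall>x\<in>X. p dvd c x))"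

lemma pind_int_rel:
  assumes pi: "pind A p X" and p: "\<bar>p\<bar> \<ge> 2" and A0: "0 \<in> A"
  shows "\<And>c. finite t \<Longrightarrow> t \<subseteq> X \<Longrightarrow> (\<Sum>w\<in>t. of_int (c w) * w) = (0::complex) \<Longrightarrow> v \<in> t \<Longrightarrow> c v \<noteq> 0 \<Longrightarrow> False"
proof -
  fix c :: "complex \<Rightarrow> int"
  assume t: "finite t" "t \<subseteq> X"
  show "(\<Sum>w\<in>t. of_int (c w) * w) = (0::complex) \<Longrightarrow> v \<in> t \<Longrightarrow> c v \<noteq> 0 \<Longrightarrow> False"
  proof (induction "nat (\<Sum>w\<in>t. \<bar>c w\<bar>)" arbitrary: c v rule: less_induct)
    case less
    show False
    proof (cases "\<forall>w\<in>t. p dvd c w")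
      case True
      define c' where "c' w = c w div p" for w
      have cc: "c w = p * c' w" if "w \<in> t" for w using True that unfolding c'_def by simp
      have "(\<Sum>w\<in>t. of_int (c w) * w) = of_int p * (\<Sum>w\<in>t. of_int (c' w) * w)"
        by (simp add: sum_distrib_left cc mult.assoc)
      then have s0: "(\<Sum>w\<in>t. of_int (c' w) * w) = (0::complex)" using less.prems p by auto
      have cv: "c' v \<noteq> 0" using cc[OF less.prems(2)] less.prems(3) by auto
      have le: "\<bar>c' w\<bar> \<le> \<bar>c w\<bar>" if "w \<in> t" for w
      proof -
        have "\<bar>c w\<bar> = \<bar>p\<bar> * \<bar>c' w\<bar>" using cc[OF that] by (simp add: abs_mult)
        moreover have "2 * \<bar>c' w\<bar> \<le> \<bar>p\<bar> * \<bar>c' w\<bar>" using p by (intro mult_right_mono) auto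
        ultimately show ?thesis by linarith
      qed
      have lt: "\<bar>c' v\<bar> < \<bar>c v\<bar>"
      proof -
        have "\<bar>c v\<bar> = \<bar>p\<bar> * \<bar>c' v\<bar>" using cc[OF less.prems(2)] by (simp add: abs_mult)
        moreover have "2 * \<bar>c' v\<bar> \<le> \<bar>p\<bar> * \<bar>c' v\<bar>" using p by (intro mult_right_mono) auto
        moreover have "\<bar>c' v\<bar> > 0" using cv by simp
        ultimately show ?thesis by linarith
      qed
      have "(\<Sum>w\<in>t. \<bar>c' w\<bar>) < (\<Sum>w\<in>t. \<bar>c w\<bar>)"
        using t(1) less.prems(2) le lt by (intro sum_strict_mono_ex1) auto
      moreover have "0 \<le> (\<Sum>w\<in>t. \<bar>c' w\<bar>)" by (simp add: sum_nonneg)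
      ultimately have "nat (\<Sum>w\<in>t. \<bar>c' w\<bar>) < nat (\<Sum>w\<in>t. \<bar>c w\<bar>)"
        by linarith
      then show False using less.hyps[OF _ s0 less.prems(2) cv] by blast
    next
      case False
      then obtain w where w: "w \<in> t" "\<not> p dvd c w" by blast
      define c0 where "c0 x = (if x \<in> t then c x else 0)" for x
      have "(\<Sum>x\<in>X. of_int (c0 x) * x) = (\<Sum>x\<in>t. of_int (c0 x) * x)"
        using pi t unfolding pind_def by (intro sum.mono_neutral_right) (auto simp: c0_def)
      also have "\<dots> = (\<Sum>x\<in>t. of_int (c x) * x)" by (rule sum.cong) (auto simp: c0_def)
      finally have "(\<Sum>x\<in>X. of_int (c0 x) * x) = of_int p * 0" using less.prems(1) by simp
      then have "\<forall>x\<in>X. p dvd c0 x" using pi A0 unfolding pind_def by blast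
      then have "p dvd c0 w" using w t by auto
      then show False using w by (simp add: c0_def)
    qed
  qed
qed

lemma clear_denoms:
  fixes u :: "complex \<Rightarrow> rat"
  assumes "finite t"
  shows "\<exists>D::int. D > 0 \<and> (\<forall>w\<in>t. \<exists>c::int. of_int D * u w = of_int c)"
  using assms
proof (induction t rule: finite_induct)
  case empty then show ?case by (auto intro!: exI[of _ 1])
next
  case (insert w t)
  then obtain D where D: "D > 0" "\<forall>w\<in>t. \<exists>c::int. of_int D * u w = of_int c" by blast
  obtain a b where ab: "quotient_of (u w) = (a, b)" by (cases "quotient_of (u w)")
  have b: "b > 0" using quotient_of_denom_pos[OF ab] .
  have uw: "u w = of_int a / of_int b" using quotient_of_div[OF ab] .
  have "\<forall>w'\<in>insert w t. \<exists>c::int. of_int (D * b) * u w' = of_int c"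
  proof
    fix w' assume "w' \<in> insert w t"
    then show "\<exists>c::int. of_int (D * b) * u w' = of_int c"
    proof
      assume "w' = w"
      then show ?thesis using b uw by (intro exI[of _ "D * a"]) (simp add: field_simps)
    next
      assume "w' \<in> t"
      then obtain c where "of_int D * u w' = of_int c" using D by blast
      then show ?thesis by (intro exI[of _ "b * c"]) (simp add: algebra_simps)
    qed
  qed
  then show ?case using D b by (intro exI[of _ "D * b"]) auto
qed

lemma pind_independent:
  assumes pi: "pind A p X" and p: "\<bar>p\<bar> \<ge> 2" and A0: "0 \<in> A"
  shows "ratvs.independent X"
  unfolding ratvs.independent_explicit_module
proof (intro allI impI)
  fix t u v
  assume t: "finite t" "t \<subseteq> X" and s: "(\<Sum>v\<in>t. of_rat (u v) * v) = 0" and v: "v \<in> t"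
  show "u v = 0"
  proof (rule ccontr)
    assume uv: "u v \<noteq> 0"
    obtain D where D: "D > 0" "\<forall>w\<in>t. \<exists>c::int. of_int D * u w = of_int c"
      using clear_denoms[OF t(1), of u] by blast
    define c where "c w = (SOME c::int. of_int D * u w = of_int c)" for w
    have c: "of_int D * u w = of_int (c w)" if "w \<in> t" for w
      using D(2) that unfolding c_def by (metis (mono_tags, lifting) someI_ex)
    have "(\<Sum>w\<in>t. of_int (c w) * w) = (\<Sum>w\<in>t. of_int D * (of_rat (u w) * w) :: complex)"
    proof (rule sum.cong)
      fix w assume "w \<in> t"
      then have "(of_int (c w) :: complex) = of_rat (of_int (c w))" by simp
      also have "\<dots> = of_rat (of_int D * u w)" using c[OF \<open>w \<in> t\<close>] by simp
      also have "\<dots> = of_int D * of_rat (u w)" by (simp add: of_rat_mult)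
      finally show "of_int (c w) * w = of_int D * (of_rat (u w) * w)" by simp
    qed simp
    also have "\<dots> = of_int D * (\<Sum>v\<in>t. of_rat (u v) * v)" by (simp add: sum_distrib_left)
    also have "\<dots> = 0" using s by simp
    finally have z: "(\<Sum>w\<in>t. of_int (c w) * w) = (0::complex)" .
    have "c v \<noteq> 0" using c[OF v] uv D(1) by auto
    then show False using pind_int_rel[OF pi p A0 t z v] by blast
  qed
qed

lemma span_of_K:
  assumes "finite_over_rat K"
  shows "\<exists>B. finite B \<and> K \<subseteq> ratvs.span B"
proof -
  obtain B where B: "finite B" "B \<subseteq> K" "K = {\<Sum>b\<in>B. q b * b | q. \<forall>b. q b \<in> \<rat>}"
    using assms unfolding finite_over_rat_def by blast
  have "K \<subseteq> ratvs.span B"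
  proof
    fix x assume "x \<in> K"
    then obtain q where q: "x = (\<Sum>b\<in>B. q b * b)" "\<forall>b. q b \<in> \<rat>" using B(3) by blast
    define r where "r b = (SOME r. q b = of_rat r)" for b
    have r: "q b = of_rat (r b)" for b
      using q(2) unfolding r_def by (metis (mono_tags, lifting) Rats_cases someI_ex)
    have "x = (\<Sum>b\<in>B. of_rat (r b) * b)" using q(1) r by simp
    then show "x \<in> ratvs.span B" unfolding ratvs.span_finite[OF B(1)] by blast
  qed
  then show ?thesis using B(1) by blast
qed

lemma pind_card:
  assumes pi: "pind A p X" and p: "\<bar>p\<bar> \<ge> 2" and A0: "0 \<in> A" and B: "finite B" "A \<subseteq> ratvs.span B"
  shows "card X \<le> card B"
  using ratvs.independent_span_bound[OF B(1) pind_independent[OF pi p A0]] pi B(2)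
  unfolding pind_def by blast




lemma fin_gen:
  assumes sr: "csubring A" and B: "finite B" "A \<subseteq> ratvs.span B"
    and P: "maximal_ideal A P" and p: "prime (p::int)" and pP: "of_int p \<in> P"
  shows "\<exists>X. finite X \<and> X \<subseteq> P \<and> P \<subseteq> gen_ideal A (insert (of_int p) X)"
proof -
  have PI: "is_ideal A P" using P by (simp add: maximal_ideal_def)
  have PA: "P \<subseteq> A" using PI by (simp add: is_ideal_def)
  have p2: "\<bar>p\<bar> \<ge> 2" using prime_gt_1_int[OF p] by simp
  have A0: "0 \<in> A" using sr by (simp add: csubring_def)
  define Pr where "Pr k = (\<exists>X. X \<subseteq> P \<and> pind A p X \<and> card X = k)" for k
  have "Pr 0" unfolding Pr_def pind_def by (intro exI[of _ "{}"]) auto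
  moreover have "\<forall>k. Pr k \<longrightarrow> k \<le> card B"
    unfolding Pr_def using pind_card[OF _ p2 A0 B] by blast
  ultimately obtain k where k: "Pr k" "\<forall>k'. Pr k' \<longrightarrow> k' \<le> k"
    using Nat.ex_has_greatest_nat[of Pr 0 "card B"] by blast
  then obtain X where X: "X \<subseteq> P" "pind A p X" "card X = k" unfolding Pr_def by blast
  have fX: "finite X" using X(2) unfolding pind_def by simp
  define G where "G = gen_ideal A (insert (of_int p) X)"
  have GA: "insert (of_int p) X \<subseteq> A" using sr_int[OF sr] X(1) PA by auto
  have GI: "is_ideal A G" unfolding G_def using gen_ideal_ideal[OF sr GA] .
  have pG: "of_int p \<in> G" and XG: "X \<subseteq> G" unfolding G_def using gen_ideal_sub by blast+
  have "P \<subseteq> G"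
  proof
    fix y assume yP: "y \<in> P"
    show "y \<in> G"
    proof (cases "y \<in> X")
      case True then show ?thesis using XG by blast
    next
      case False
      have "\<not> Pr (Suc k)" using k(2) by fastforce
      moreover have "card (insert y X) = Suc k" using False fX X(3) by simp
      ultimately have "\<not> pind A p (insert y X)" using yP X(1) unfolding Pr_def by blast
      then obtain c z where cz: "z \<in> A" "(\<Sum>x\<in>insert y X. of_int (c x) * x) = of_int p * z"
        and x0: "\<exists>x\<in>insert y X. \<not> p dvd c x"
        using fX yP X(1) PA unfolding pind_def by blast
      have sum: "of_int (c y) * y + (\<Sum>x\<in>X. of_int (c x) * x) = of_int p * z"
        using cz(2) False fX by simp
      have yA: "y \<in> A" using yP PA by blast
      have ncy: "\<not> p dvd c y"
      proof
        assume "p dvd c y"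
        then obtain m where m: "c y = p * m" by blast
        have "(\<Sum>x\<in>X. of_int (c x) * x) = of_int p * (z - of_int m * y)"
          using sum m by (simp add: algebra_simps)
        moreover have "z - of_int m * y \<in> A" using sr cz(1) yA sr_int[OF sr, of m]
          by (simp add: sr_diff csubring_def)
        ultimately have "\<forall>x\<in>X. p dvd c x" using X(2) unfolding pind_def by blast
        then show False using x0 \<open>p dvd c y\<close> by blast
      qed
      have "coprime p (c y)" using prime_imp_coprime_int[OF p ncy] .
      then obtain u w where uw: "u * c y + w * p = 1"
        using bezout_int[of "c y" p] by (auto simp: gcd.commute coprime_iff_gcd_eq_1)
      have "y = of_int (u * c y + w * p) * y" using uw by simp
      also have "\<dots> = of_int u * (of_int (c y) * y) + of_int w * (y * of_int p)"
        by (simp add: algebra_simps)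
      also have "of_int (c y) * y = z * of_int p - (\<Sum>x\<in>X. of_int (c x) * x)"
        using sum by (simp add: algebra_simps)
      finally have yeq: "y = of_int u * (z * of_int p - (\<Sum>x\<in>X. of_int (c x) * x)) + of_int w * (y * of_int p)" .
      have "(\<Sum>x\<in>X. of_int (c x) * x) \<in> G"
        using fX XG GI sr_int[OF sr] by (intro ideal_sum) (auto intro: ideal_lmult)
      moreover have "z * of_int p \<in> G" using GI cz(1) pG by (rule ideal_lmult)
      ultimately have d: "z * of_int p - (\<Sum>x\<in>X. of_int (c x) * x) \<in> G"
        using ideal_diff[OF sr GI] by blast
      have e: "y * of_int p \<in> G" using GI yA pG by (rule ideal_lmult)
      have "of_int u * (z * of_int p - (\<Sum>x\<in>X. of_int (c x) * x)) + of_int w * (y * of_int p) \<in> G"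
        by (rule ideal_add[OF GI ideal_lmult[OF GI sr_int[OF sr] d] ideal_lmult[OF GI sr_int[OF sr] e]])
      then show ?thesis using yeq by simp
    qed
  qed
  then show ?thesis using fX X(1) unfolding G_def by blast
qed




lemma prime_in_P:
  assumes sr: "csubring A" and P: "maximal_ideal A P"
  shows "of_nat M \<in> P \<Longrightarrow> M > 0 \<Longrightarrow> \<exists>p. prime p \<and> of_nat p \<in> P"
proof (induction M rule: less_induct)
  case (less M)
  have PI: "is_ideal A P" using P by (simp add: maximal_ideal_def)
  show ?case
  proof (cases "M = 1")
    case True
    then have "1 \<in> P" using less.prems by simp
    then have "A \<subseteq> P" using ideal_lmult[OF PI _ \<open>1 \<in> P\<close>] by auto
    moreover have "P \<subseteq> A" using PI by (simp add: is_ideal_def)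
    ultimately show ?thesis using P by (simp add: maximal_ideal_def)
  next
    case False
    then obtain q where q: "prime q" "q dvd M" using prime_factor_nat by blast
    then obtain M' where M': "M = q * M'" by blast
    have "of_nat q * of_nat M' \<in> P" using less.prems M' by simp
    moreover have "(of_nat q :: complex) \<in> A" using sr_int[OF sr, of "int q"] by simp
    moreover have "(of_nat M' :: complex) \<in> A" using sr_int[OF sr, of "int M'"] by simp
    ultimately have "of_nat q \<in> P \<or> (of_nat M' :: complex) \<in> P"
      using maximal_prime[OF sr P] by blast
    then show ?thesis
    proof
      assume "of_nat q \<in> P" then show ?thesis using q by blast
    next
      assume "(of_nat M' :: complex) \<in> P"
      moreover have M'0: "M' > 0" using M' less.prems(2) by (cases "M' = 0") auto
      moreover have "M' < M"
      proof -
        have "1 * M' < q * M'" using prime_gt_1_nat[OF q(1)] M'0 by (intro mult_strict_right_mono) auto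
        then show ?thesis using M' by simp
      qed
      ultimately show ?thesis using less.IH by blast
    qed
  qed
qed

lemma main_abstract:
  assumes sr: "csubring A" and B: "finite B" "A \<subseteq> ratvs.span B" and t: "t > 0"
    and a: "a \<in> ker_pr A t"
  shows "a \<in> H_ft A f t"
proof (rule ccontr)
  assume naI: "a \<notin> H_ft A f t"
  define I where "I = H_ft A f t"
  have genA: "{k ^ f k * (k ^ t - 1) | k. k \<in> A} \<subseteq> A"
  proof clarify
    fix k assume k: "k \<in> A"
    have 1: "k ^ f k \<in> A" by (rule sr_pow[OF sr k])
    have "(1::complex) \<in> A" using sr by (simp add: csubring_def)
    then have 2: "k ^ t - 1 \<in> A" by (rule sr_diff[OF sr sr_pow[OF sr k]])
    show "k ^ f k * (k ^ t - 1) \<in> A" using sr 1 2 by (simp add: csubring_def)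
  qed
  have II: "is_ideal A I" unfolding I_def H_ft_def using gen_ideal_ideal[OF sr genA] .
  have gI: "k ^ f k * (k ^ t - 1) \<in> I" if "k \<in> A" for k
  proof -
    have "k ^ f k * (k ^ t - 1) \<in> {k ^ f k * (k ^ t - 1) | k. k \<in> A}" using that by blast
    then show ?thesis unfolding I_def H_ft_def
      using gen_ideal_sub[of "{k ^ f k * (k ^ t - 1) | k. k \<in> A}" A] by (rule subsetD[rotated])
  qed
  have aA: "a \<in> A" using a unfolding ker_pr_def by blast
  have A1: "1 \<in> A" and A0: "0 \<in> A" using sr by (auto simp: csubring_def)
  define J where "J = {y \<in> A. y * a \<in> I}"
  have JI: "is_ideal A J" unfolding is_ideal_def
  proof (intro conjI ballI)
    show "J \<subseteq> A" unfolding J_def by blast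
    show "0 \<in> J" unfolding J_def using A0 ideal_0[OF II] by simp
  next
    fix x y assume "x \<in> J" "y \<in> J"
    then have "x \<in> A" "y \<in> A" "x * a \<in> I" "y * a \<in> I" unfolding J_def by auto
    moreover have "(x + y) * a = x * a + y * a" by (simp add: distrib_right)
    ultimately have "(x + y) * a \<in> I" "x + y \<in> A" using ideal_add[OF II] sr unfolding csubring_def by auto
    then show "x + y \<in> J" unfolding J_def by blast
  next
    fix r x assume "r \<in> A" "x \<in> J"
    then have "r \<in> A" "x \<in> A" "x * a \<in> I" unfolding J_def by auto
    moreover have "(r * x) * a = r * (x * a)" by (simp add: mult.assoc)
    moreover have "r * (x * a) \<in> I" using ideal_lmult[OF II \<open>r \<in> A\<close> \<open>x * a \<in> I\<close>] .
    moreover have "r * x \<in> A" using sr \<open>r \<in> A\<close> \<open>x \<in> A\<close> by (simp add: csubring_def)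
    ultimately show "r * x \<in> J" unfolding J_def by (simp add: mult.assoc)
  qed
  have "1 \<notin> J" using naI unfolding J_def I_def by auto
  then obtain P where P: "maximal_ideal A P" "J \<subseteq> P" using exists_maximal[OF sr JI] by blast
  have PI: "is_ideal A P" using P by (simp add: maximal_ideal_def)
  have PA: "P \<subseteq> A" using PI by (simp add: is_ideal_def)
  have IJ: "I \<subseteq> J" unfolding J_def using II aA ideal_sub[OF II] ideal_rmult[OF II] by blast
  have n1P: "1 \<notin> P"
  proof
    assume "1 \<in> P"
    then have "A \<subseteq> P" using ideal_rmult[OF PI] by (metis mult_1 subsetI)
    then show False using P(1) PA unfolding maximal_ideal_def by blast
  qed
  have prime: "x \<in> P \<or> y \<in> P" if "x \<in> A" "y \<in> A" "x * y \<in> P" for x y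
    using maximal_prime[OF sr P(1) that] by blast
  define Q where "Q = {y \<in> A. \<exists>s\<in>A. s \<notin> P \<and> s * y \<in> I}"
  have QI: "is_ideal A Q" unfolding is_ideal_def
  proof (intro conjI ballI)
    show "Q \<subseteq> A" unfolding Q_def by auto
    show "0 \<in> Q" unfolding Q_def using A0 A1 n1P ideal_0[OF II] by auto
  next
    fix x y assume "x \<in> Q" "y \<in> Q"
    then obtain s1 s2 where s: "s1 \<in> A" "s1 \<notin> P" "s1 * x \<in> I" "s2 \<in> A" "s2 \<notin> P" "s2 * y \<in> I" "x \<in> A" "y \<in> A"
      unfolding Q_def by blast
    have "s1 * s2 \<notin> P" using prime[OF s(1,4)] s by blast
    moreover have "s1 * s2 \<in> A" using sr s by (simp add: csubring_def)
    moreover have "(s1 * s2) * (x + y) = s2 * (s1 * x) + s1 * (s2 * y)" by (simp add: algebra_simps)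
    moreover have "s2 * (s1 * x) + s1 * (s2 * y) \<in> I"
      using ideal_add[OF II ideal_lmult[OF II s(4) s(3)] ideal_lmult[OF II s(1) s(6)]] .
    moreover have "x + y \<in> A" using sr s by (simp add: csubring_def)
    ultimately have "s1 * s2 \<in> A \<and> s1 * s2 \<notin> P \<and> (s1 * s2) * (x + y) \<in> I" "x + y \<in> A" by simp_all
    then show "x + y \<in> Q" unfolding Q_def by blast
  next
    fix r x assume "r \<in> A" "x \<in> Q"
    then obtain s where s: "s \<in> A" "s \<notin> P" "s * x \<in> I" "x \<in> A" unfolding Q_def by blast
    have "s * (r * x) = r * (s * x)" by (simp add: algebra_simps)
    moreover have "r * (s * x) \<in> I" using ideal_lmult[OF II \<open>r \<in> A\<close> s(3)] .
    moreover have "r * x \<in> A" using sr s \<open>r \<in> A\<close> by (simp add: csubring_def)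
    ultimately have "s * (r * x) \<in> I" "r * x \<in> A" by (simp_all add: mult.left_commute)
    then show "r * x \<in> Q" unfolding Q_def using s by blast
  qed
  have IQ: "I \<subseteq> Q" unfolding Q_def using A1 n1P ideal_sub[OF II] by force
  define M :: nat where "M = 2 ^ f 2 * (2 ^ t - 1)"
  have M0: "M > 0" unfolding M_def using t one_less_power[of "2::nat" t] by simp
  have 2: "(2::complex) \<in> A" using sr_int[OF sr, of 2] by simp
  have "(of_nat M :: complex) = 2 ^ f 2 * (2 ^ t - 1)" unfolding M_def
    by (simp add: of_nat_diff)
  then have "(of_nat M :: complex) \<in> I" using gI[OF 2] by simp
  then have MP: "(of_nat M :: complex) \<in> P" using IJ P(2) by blast
  obtain p where p: "prime p" "(of_nat p :: complex) \<in> P" using prime_in_P[OF sr P(1) MP M0] by blast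
  obtain M' where M': "M = p ^ multiplicity p M * M'" "\<not> p dvd M'"
  proof -
    have "p \<noteq> 1" using p(1) by auto
    then show ?thesis using multiplicity_decompose'[of M p] M0 that by auto
  qed
  define e where "e = multiplicity p M"
  have M'P: "(of_nat M' :: complex) \<notin> P"
  proof
    assume M'P: "(of_nat M' :: complex) \<in> P"
    have "coprime p M'" using prime_imp_coprime_nat[OF p(1) M'(2)] .
    then have "coprime (int p) (int M')" by simp
    then obtain u v where uv: "u * int p + v * int M' = 1"
      using bezout_int[of "int p" "int M'"] by (auto simp: coprime_iff_gcd_eq_1)
    have "(of_int u * of_nat p + of_int v * of_nat M' :: complex) \<in> P"
      using ideal_add[OF PI ideal_lmult[OF PI sr_int[OF sr] p(2)] ideal_lmult[OF PI sr_int[OF sr] M'P]] .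
    moreover have "(of_int u * of_nat p + of_int v * of_nat M' :: complex) = of_int (u * int p + v * int M')"
      by simp
    ultimately show False using uv n1P by simp
  qed
  have peQ: "(of_nat p :: complex) ^ e \<in> Q"
  proof -
    have Me: "M = p ^ e * M'" using M'(1) unfolding e_def .
    have "(of_nat M' :: complex) * of_nat p ^ e = of_nat (p ^ e * M')" by (simp add: mult.commute)
    then have "(of_nat M' :: complex) * of_nat p ^ e = of_nat M" by (simp only: Me[symmetric])
    moreover have "(of_nat M :: complex) \<in> I" using \<open>(of_nat M :: complex) \<in> I\<close> .
    moreover have "(of_nat M' :: complex) \<in> A" "(of_nat p :: complex) ^ e \<in> A"
      using sr_int[OF sr, of "int M'"] sr_int[OF sr, of "int p ^ e"] by auto
    ultimately show ?thesis unfolding Q_def using M'P by auto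
  qed
  have "\<exists>X. finite X \<and> X \<subseteq> P \<and> P \<subseteq> gen_ideal A (insert (of_int (int p)) X)"
    using fin_gen[OF sr B P(1), of "int p"] p by simp
  then obtain X where X: "finite X" "X \<subseteq> P" "P \<subseteq> gen_ideal A (insert (of_int (int p)) X)"
    by blast
  define S where "S = insert (of_nat p :: complex) X"
  define N where "N s = (if s = of_nat p then e else f s)" for s
  have SA: "S \<subseteq> A" unfolding S_def using X(2) PA p(2) by blast
  have SN: "s ^ N s \<in> Q" if "s \<in> S" for s
  proof (cases "s = of_nat p")
    case True then show ?thesis using peQ unfolding N_def by simp
  next
    case False
    then have sX: "s \<in> X" using that unfolding S_def by simp
    then have sP: "s \<in> P" and sA: "s \<in> A" using X(2) PA by blast+
    obtain t' where t': "t = Suc t'" using t gr0_conv_Suc by blast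
    have "s ^ t = s ^ t' * s" using t' by simp
    then have "s ^ t \<in> P" using ideal_lmult[OF PI sr_pow[OF sr sA] sP] by simp
    then have "s ^ t - 1 \<notin> P" using n1P ideal_diff[OF sr PI, of "s ^ t" "s ^ t - 1"] by auto
    moreover have "s ^ t - 1 \<in> A" using sr sA A1 by (simp add: sr_diff sr_pow)
    moreover have "(s ^ t - 1) * s ^ f s \<in> I" using gI[OF sA] by (simp add: mult.commute)
    moreover have "s ^ f s \<in> A" using sr sA by (simp add: sr_pow)
    ultimately show ?thesis unfolding Q_def N_def using False by auto
  qed
  define n where "n = (\<Sum>s\<in>S. N s)"
  have PnQ: "ideal_pow A P n \<subseteq> Q" unfolding n_def
    using radical_pow[OF sr QI PI _ _ SA _ SN] X(1,3) unfolding S_def by simp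
  have PnI: "is_ideal A (ideal_pow A P n)" using ideal_pow_ideal[OF sr PI] .
  have "(\<lambda>_. a) \<in> H_loc A P t" using a P(1) unfolding ker_pr_def by blast
  then have "\<exists>(k::nat) c g. (\<forall>i<k. c i \<in> completion A P \<and> g i \<in> compl_units A P) \<and>
      compl_eq A P (\<lambda>_. a) (\<lambda>n. \<Sum>i<k. c i n * ((g i n) ^ t - 1))"
    unfolding H_loc_def mem_Collect_eq by (rule conjunct2)
  then obtain k :: nat and c g where cg: "\<forall>i<k. c i \<in> completion A P \<and> g i \<in> compl_units A P"
    and eq: "compl_eq A P (\<lambda>_. a) (\<lambda>n. \<Sum>i<k. c i n * ((g i n) ^ t - 1))"
    by blast
  have trm: "c i n * ((g i n) ^ t - 1) \<in> Q" if ik: "i < k" for i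
  proof -
    have ci: "c i n \<in> A" using cg ik unfolding completion_def by blast
    obtain y where y: "y \<in> completion A P" "compl_eq A P (\<lambda>n. g i n * y n) (\<lambda>n. 1)"
      and gc: "g i \<in> completion A P"
      using cg ik unfolding compl_units_def by blast
    define G where "G = g i n"
    define Y where "Y = y n"
    define L where "L = f G"
    have GA: "G \<in> A" using gc unfolding G_def completion_def by blast
    have YA: "Y \<in> A" using y(1) unfolding Y_def completion_def by blast
    have GY: "G * Y - 1 \<in> ideal_pow A P n" using y(2) unfolding compl_eq_def G_def Y_def by blast
    have "(G * Y) ^ L - 1 = (G * Y - 1) * (\<Sum>i<L. (G * Y) ^ i)" by (rule power_diff_1_eq)
    moreover have "(\<Sum>i<L. (G * Y) ^ i) \<in> A" using sr GA YA
      by (intro sr_sum sr_pow) (auto simp: csubring_def)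
    ultimately have GYL: "(G * Y) ^ L - 1 \<in> ideal_pow A P n"
      using ideal_rmult[OF PnI _ GY] by simp
    have Gt: "G ^ t - 1 \<in> A" using sr GA A1 by (simp add: sr_diff sr_pow)
    have e1: "G ^ t - 1 = Y ^ L * (G ^ L * (G ^ t - 1)) - ((G * Y) ^ L - 1) * (G ^ t - 1)"
      by (simp add: power_mult_distrib algebra_simps)
    have e2: "Y ^ L * (G ^ L * (G ^ t - 1)) \<in> Q"
      using IQ gI[OF GA] ideal_lmult[OF QI sr_pow[OF sr YA]] unfolding L_def by blast
    have e3: "((G * Y) ^ L - 1) * (G ^ t - 1) \<in> Q"
      using PnQ ideal_rmult[OF PnI Gt GYL] by blast
    have "G ^ t - 1 \<in> Q" using ideal_diff[OF sr QI e2 e3] by (subst e1)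
    then show ?thesis using ideal_lmult[OF QI ci] unfolding G_def by blast
  qed
  have "a - (\<Sum>i<k. c i n * ((g i n) ^ t - 1)) \<in> ideal_pow A P n" using eq unfolding compl_eq_def by simp
  then have "a - (\<Sum>i<k. c i n * ((g i n) ^ t - 1)) \<in> Q" using PnQ by (rule subsetD[rotated])
  moreover have "(\<Sum>i<k. c i n * ((g i n) ^ t - 1)) \<in> Q" by (rule ideal_sum[OF _ QI]) (auto intro: trm)
  ultimately have "(a - (\<Sum>i<k. c i n * ((g i n) ^ t - 1))) + (\<Sum>i<k. c i n * ((g i n) ^ t - 1)) \<in> Q"
    by (rule ideal_add[OF QI])
  then have "a \<in> Q" by simp
  then obtain s where s: "s \<in> A" "s \<notin> P" "s * a \<in> I" unfolding Q_def by blast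
  then have "s \<in> J" unfolding J_def by blast
  then show False using s P(2) by blast
qed


theorem mainTheorem13:
  fixes K :: "complex set" and f :: "complex \<Rightarrow> nat" and t :: nat
  assumes "number_field K" and "t > 0"
  shows "ker_pr (ring_of_integers K) t \<subseteq> H_ft (ring_of_integers K) f t \<and>
         t_congruing (ring_of_integers K) t (H_ft (ring_of_integers K) f t)"
proof -
  define A where "A = ring_of_integers K"
  have sf: "is_subfield K" and fo: "finite_over_rat K" using assms(1) unfolding number_field_def by auto
  have AK: "A \<subseteq> K" unfolding A_def ring_of_integers_def by auto
  have sr: "csubring A" unfolding csubring_def
  proof (intro conjI ballI)
    show "0 \<in> A" "1 \<in> A" using sf unfolding A_def ring_of_integers_def is_subfield_def by auto
  next
    fix x y assume xy: "x \<in> A" "y \<in> A"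
    then have K: "x \<in> K" "y \<in> K" and ai: "algebraic_int x" "algebraic_int y"
      unfolding A_def ring_of_integers_def by auto
    have cl: "x + y \<in> K" "x * y \<in> K" "0 - x \<in> K" using sf K unfolding is_subfield_def by auto
    show "x + y \<in> A" "x * y \<in> A" "- x \<in> A"
      using cl ai algebraic_int_plus_times[OF ai] unfolding A_def ring_of_integers_def by auto
  qed
  obtain B where B: "finite B" "K \<subseteq> ratvs.span B" using span_of_K[OF fo] by blast
  have BA: "A \<subseteq> ratvs.span B" using AK B(2) by blast
  have part1: "ker_pr A t \<subseteq> H_ft A f t"
    using main_abstract[OF sr B(1) BA assms(2)] by blast
  have part2: "t_congruing A t (H_ft A f t)"
    unfolding t_congruing_def
  proof
    fix a assume aA: "a \<in> A"
    have "a ^ f a * (a ^ t - 1) \<in> {k ^ f k * (k ^ t - 1) | k. k \<in> A}" using aA by blast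
    then have "a ^ f a * (a ^ t - 1) \<in> H_ft A f t" unfolding H_ft_def
      using gen_ideal_sub[of "{k ^ f k * (k ^ t - 1) | k. k \<in> A}" A] by (rule subsetD[rotated])
    then show "\<exists>N. a ^ N * (a ^ t - 1) \<in> H_ft A f t" by blast
  qed
  show ?thesis using part1 part2 unfolding A_def by blast
qed

end
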